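(* Assume that there exists a Banach space $(Z,|||\cdot|||)$ compactly embedded in $Y$, and that all $\Gamma_x(s,t)$ ($x\in X$, $(s,t)\in\Delta_J$) and all $D^\epsilon(x,y)$ ($\epsilon \in (0,1]$, $(x,y) \in X \times X$) are $\mathcal{B}(Z)$-contractions (they map $Z$ into $Z$ with operator norm on $Z$ at most $1$). Then $\{V_\epsilon\}$ satisfies the compact containment criterion in $Z$: for every $f\in Z$, $s\in J$, $\Delta\in(0,1]$ and $T\in J(s)$ there is a compact set $K\subseteq Y$ with $\liminf_{\epsilon\to0}\mathbb P[V_\epsilon(s,t)f\in K\ \forall t\in[s,T]]\ge1-\Delta$.
   Context: $(Y,\|\cdot\|)$ is a real separable Banach space; $J$ is $\mathbb{R}^+$ or $[0,T_\infty]$, $\Delta_J=\{(s,t)\in J^2:s\le t\}$, $J(s)=\{t\in J:t\ge s\}$. An inhomogeneous $Y$-semigroup is a map $\Gamma:\Delta_J\to\mathcal B(Y)$ with $\Gamma(t,t)=I$, $\Gamma(s,r)\Gamma(r,t)=\Gamma(s,t)$ for $s\le r\le t$. Probabilistic setting: $(\Omega,\mathcal F,\mathbb P)$ complete; $X$ finite; $(x_n,T_n)_{n\ge0}$ a Markov renewal process ($x_n\in X$, $T_0=0<T_1<T_2<\dots$) with semi-Markov kernel $Q$; $N(t)=\sup\{n:T_n\le t\}$ (finite everywhere after restricting $\Omega$ to a full-measure event); $x(t)=x_{N(t)}$; $N_s(t)=N(t)-N(s)$, $T_0(s)=s$, $T_n(s)=T_{N(s)+n}$ ($n\ge1$), $x_n(s)=x(T_n(s))$.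 $(\Gamma_x)_{x\in X}$ are inhomogeneous $Y$-semigroups (jointly measurable in their arguments) and $(D^\epsilon(x,y))_{x,y\in X,\epsilon\in(0,1]}$ are operators in $\mathcal B(Y)$ with $(x,y,f)\mapsto D^\epsilon(x,y)f$ measurable. With $t^{\epsilon,s}:=s+\epsilon(t-s)$ and $T^{\epsilon,s}_k(s):=s+\epsilon(T_k(s)-s)$, the rescaled random evolution is defined pathwise for $(s,t)\in\Delta_J$, $\epsilon\in(0,1]$ by $V_\epsilon(s,t)=\Big[\prod_{k=1}^{N_s(t^{1/\epsilon,s})}\Gamma_{x_{k-1}(s)}(T^{\epsilon,s}_{k-1}(s),T^{\epsilon,s}_k(s))D^\epsilon(x_{k-1}(s),x_k(s))\Big]\Gamma_{x(t^{1/\epsilon,s})}\big(T^{\epsilon,s}_{N_s(t^{1/\epsilon,s})}(s),t\big)$ (product ordered left to right, empty product $I$), where $t^{1/\epsilon,s}=s+(t-s)/\epsilon$. *)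

theory Defs
  imports "HOL-Probability.Probability"
begin

definition DeltaJ :: "real set \<Rightarrow> (real \<times> real) set" where
  "DeltaJ J = {(s,t). s \<in> J \<and> t \<in> J \<and> s \<le> t}"

definition is_time_set :: "real set \<Rightarrow> bool" where
  "is_time_set J \<longleftrightarrow> J = {0..} \<or> (\<exists>Tinf. J = {0..Tinf})"

definition inhom_semigroup :: "real set \<Rightarrow> (real \<Rightarrow> real \<Rightarrow> ('y::real_normed_vector \<Rightarrow>\<^sub>L 'y)) \<Rightarrow> bool" where
  "inhom_semigroup J G \<longleftrightarrow>
     (\<forall>t\<in>J. G t t = id_blinfun) \<and>
     (\<forall>s r t. s \<in> J \<and> t \<in> J \<and> s \<le> r \<and> r \<le> t \<longrightarrow> G s r o\<^sub>L G r t = G s t)"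

definition semi_markov_kernel :: "('x::finite \<Rightarrow> 'x \<Rightarrow> real \<Rightarrow> real) \<Rightarrow> bool" where
  "semi_markov_kernel Q \<longleftrightarrow>
     (\<forall>x y. mono (Q x y)) \<and>
     (\<forall>x y t. t \<le> 0 \<longrightarrow> Q x y t = 0) \<and>
     (\<forall>x y t. continuous (at_right t) (Q x y)) \<and>
     (\<forall>x. ((\<lambda>t. \<Sum>y\<in>UNIV. Q x y t) \<longlongrightarrow> 1) at_top)"

definition past_sigma :: "'w measure \<Rightarrow> (nat \<Rightarrow> 'w \<Rightarrow> 'x) \<Rightarrow> (nat \<Rightarrow> 'w \<Rightarrow> real) \<Rightarrow> nat \<Rightarrow> 'w set set" where
  "past_sigma M xs Tn n = sigma_sets (space M)
     ((\<Union>k\<in>{..n}. {xs k -` {x} \<inter> space M | x. True}) \<union>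
      (\<Union>k\<in>{..n}. {Tn k -` {..r} \<inter> space M | r. True}))"

text \<open>(xs n, Tn n) is a Markov renewal process with semi-Markov kernel Q; moreover the
  jump times tend to infinity on every sample path (the sample space has been restricted
  to the full-measure event on which N(t) is finite for all t).\<close>
definition markov_renewal :: "'w measure \<Rightarrow> (nat \<Rightarrow> 'w \<Rightarrow> 'x::finite) \<Rightarrow> (nat \<Rightarrow> 'w \<Rightarrow> real)
    \<Rightarrow> ('x \<Rightarrow> 'x \<Rightarrow> real \<Rightarrow> real) \<Rightarrow> bool" where
  "markov_renewal M xs Tn Q \<longleftrightarrow>
     prob_space M \<and> semi_markov_kernel Q \<and>
     (\<forall>n. xs n \<in> measurable M (count_space UNIV)) \<and>
     (\<forall>n. Tn n \<in> borel_measurable M) \<and>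
     (\<forall>\<omega>\<in>space M. Tn 0 \<omega> = 0) \<and>
     (\<forall>\<omega>\<in>space M. \<forall>n. Tn n \<omega> < Tn (Suc n) \<omega>) \<and>
     (\<forall>\<omega>\<in>space M. filterlim (\<lambda>n. Tn n \<omega>) at_top sequentially) \<and>
     (\<forall>n y t. \<forall>A\<in>past_sigma M xs Tn n.
        measure M (A \<inter> {\<omega>\<in>space M. xs (Suc n) \<omega> = y \<and> Tn (Suc n) \<omega> - Tn n \<omega> \<le> t})
        = (\<integral>\<omega>. indicator A \<omega> * Q (xs n \<omega>) y t \<partial>M))"

definition Ncnt :: "(nat \<Rightarrow> 'w \<Rightarrow> real) \<Rightarrow> real \<Rightarrow> 'w \<Rightarrow> nat" where
  "Ncnt Tn t \<omega> = Sup {n. Tn n \<omega> \<le> t}"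

definition xproc :: "(nat \<Rightarrow> 'w \<Rightarrow> 'x) \<Rightarrow> (nat \<Rightarrow> 'w \<Rightarrow> real) \<Rightarrow> real \<Rightarrow> 'w \<Rightarrow> 'x" where
  "xproc xs Tn t \<omega> = xs (Ncnt Tn t \<omega>) \<omega>"

definition Ns :: "(nat \<Rightarrow> 'w \<Rightarrow> real) \<Rightarrow> real \<Rightarrow> real \<Rightarrow> 'w \<Rightarrow> nat" where
  "Ns Tn s t \<omega> = Ncnt Tn t \<omega> - Ncnt Tn s \<omega>"

definition Ts :: "(nat \<Rightarrow> 'w \<Rightarrow> real) \<Rightarrow> real \<Rightarrow> nat \<Rightarrow> 'w \<Rightarrow> real" where
  "Ts Tn s k \<omega> = (if k = 0 then s else Tn (Ncnt Tn s \<omega> + k) \<omega>)"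

definition xs_s :: "(nat \<Rightarrow> 'w \<Rightarrow> 'x) \<Rightarrow> (nat \<Rightarrow> 'w \<Rightarrow> real) \<Rightarrow> real \<Rightarrow> nat \<Rightarrow> 'w \<Rightarrow> 'x" where
  "xs_s xs Tn s k \<omega> = xproc xs Tn (Ts Tn s k \<omega>) \<omega>"

definition Ts_eps :: "(nat \<Rightarrow> 'w \<Rightarrow> real) \<Rightarrow> real \<Rightarrow> real \<Rightarrow> nat \<Rightarrow> 'w \<Rightarrow> real" where
  "Ts_eps Tn \<epsilon> s k \<omega> = s + \<epsilon> * (Ts Tn s k \<omega> - s)"

fun prodL :: "(nat \<Rightarrow> ('y::real_normed_vector \<Rightarrow>\<^sub>L 'y)) \<Rightarrow> nat \<Rightarrow> ('y \<Rightarrow>\<^sub>L 'y)" where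
  "prodL A 0 = id_blinfun"
| "prodL A (Suc n) = prodL A n o\<^sub>L A (Suc n)"

definition Veps :: "('x \<Rightarrow> real \<Rightarrow> real \<Rightarrow> ('y::real_normed_vector \<Rightarrow>\<^sub>L 'y))
    \<Rightarrow> (real \<Rightarrow> 'x \<Rightarrow> 'x \<Rightarrow> ('y \<Rightarrow>\<^sub>L 'y))
    \<Rightarrow> (nat \<Rightarrow> 'w \<Rightarrow> 'x) \<Rightarrow> (nat \<Rightarrow> 'w \<Rightarrow> real)
    \<Rightarrow> real \<Rightarrow> real \<Rightarrow> real \<Rightarrow> 'w \<Rightarrow> ('y \<Rightarrow>\<^sub>L 'y)" where
  "Veps \<Gamma> D xs Tn \<epsilon> s t \<omega> =
     (let t' = s + (t - s) / \<epsilon>;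
          n = Ns Tn s t' \<omega>
      in prodL (\<lambda>k. \<Gamma> (xs_s xs Tn s (k - 1) \<omega>) (Ts_eps Tn \<epsilon> s (k - 1) \<omega>) (Ts_eps Tn \<epsilon> s k \<omega>)
                    o\<^sub>L D \<epsilon> (xs_s xs Tn s (k - 1) \<omega>) (xs_s xs Tn s k \<omega>)) n
         o\<^sub>L \<Gamma> (xproc xs Tn t' \<omega>) (Ts_eps Tn \<epsilon> s n \<omega>) t)"

definition compact_embedding :: "('z::banach \<Rightarrow> 'y::real_normed_vector) \<Rightarrow> bool" where
  "compact_embedding \<iota> \<longleftrightarrow> bounded_linear \<iota> \<and> inj \<iota> \<and> compact (closure (\<iota> ` cball 0 1))"

definition Z_contraction :: "('z::real_normed_vector \<Rightarrow> 'y::real_normed_vector) \<Rightarrow> ('y \<Rightarrow>\<^sub>L 'y) \<Rightarrow> bool" where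
  "Z_contraction \<iota> L \<longleftrightarrow> (\<forall>z. \<exists>z'. blinfun_apply L (\<iota> z) = \<iota> z' \<and> norm z' \<le> norm z)"

end

theory Submission
  imports Defs
begin


lemma N_finite:
  fixes T :: "nat \<Rightarrow> real"
  assumes "filterlim T at_top sequentially"
  shows "finite {n. T n \<le> t}"
proof -
  from assms have "eventually (\<lambda>n. T n > t) sequentially"
    by (simp add: filterlim_at_top_dense)
  then obtain N where N: "\<And>n. n \<ge> N \<Longrightarrow> T n > t" by (auto simp: eventually_sequentially)
  have "{n. T n \<le> t} \<subseteq> {..<N}" using N by (force simp: not_le[symmetric])
  thus ?thesis using finite_subset by blast
qed

lemma N_props:
  fixes Tn :: "nat \<Rightarrow> 'w \<Rightarrow> real"
  assumes T0: "Tn 0 \<omega> = 0" and inc: "\<And>n. Tn n \<omega> < Tn (Suc n) \<omega>"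
    and lim: "filterlim (\<lambda>n. Tn n \<omega>) at_top sequentially" and t: "0 \<le> t"
  shows "Tn (Ncnt Tn t \<omega>) \<omega> \<le> t" "\<And>n. Tn n \<omega> \<le> t \<Longrightarrow> n \<le> Ncnt Tn t \<omega>"
proof -
  have fin: "finite {n. Tn n \<omega> \<le> t}" by (rule N_finite[OF lim])
  have ne: "{n. Tn n \<omega> \<le> t} \<noteq> {}" using T0 t by (auto intro!: exI[of _ 0])
  have eq: "Ncnt Tn t \<omega> = Max {n. Tn n \<omega> \<le> t}"
    unfolding Ncnt_def using cSup_eq_Max[OF fin ne] .
  show "Tn (Ncnt Tn t \<omega>) \<omega> \<le> t" using Max_in[OF fin ne] eq by auto
  show "\<And>n. Tn n \<omega> \<le> t \<Longrightarrow> n \<le> Ncnt Tn t \<omega>" using Max_ge[OF fin] eq by auto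
qed

lemma Tn_mono:
  fixes Tn :: "nat \<Rightarrow> 'w \<Rightarrow> real"
  assumes inc: "\<And>n. Tn n \<omega> < Tn (Suc n) \<omega>" and "m \<le> n"
  shows "Tn m \<omega> \<le> Tn n \<omega>"
proof -
  have "strict_mono (\<lambda>n. Tn n \<omega>)" by (rule strict_monoI_Suc) (rule inc)
  thus ?thesis using assms(2) by (metis strict_mono_less_eq)
qed

lemma Tn_smono:
  fixes Tn :: "nat \<Rightarrow> 'w \<Rightarrow> real"
  assumes inc: "\<And>n. Tn n \<omega> < Tn (Suc n) \<omega>" and "m < n"
  shows "Tn m \<omega> < Tn n \<omega>"
proof -
  have "strict_mono (\<lambda>n. Tn n \<omega>)" by (rule strict_monoI_Suc) (rule inc)
  thus ?thesis using assms(2) by (metis strict_mono_less)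
qed

lemma Z_contraction_comp:
  "Z_contraction \<iota> A \<Longrightarrow> Z_contraction \<iota> B \<Longrightarrow> Z_contraction \<iota> (A o\<^sub>L B)"
  unfolding Z_contraction_def by (metis blinfun_apply_blinfun_compose order_trans)

lemma Z_contraction_id: "Z_contraction \<iota> id_blinfun"
  unfolding Z_contraction_def by auto

lemma prodL_contr:
  "(\<And>k. 1 \<le> k \<Longrightarrow> k \<le> n \<Longrightarrow> Z_contraction \<iota> (A k)) \<Longrightarrow> Z_contraction \<iota> (prodL A n)"
  by (induction n) (auto intro!: Z_contraction_comp Z_contraction_id)

lemma Ts_bounds:
  fixes Tn :: "nat \<Rightarrow> 'w \<Rightarrow> real"
  assumes T0: "Tn 0 \<omega> = 0" and inc: "\<And>n. Tn n \<omega> < Tn (Suc n) \<omega>"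
    and lim: "filterlim (\<lambda>n. Tn n \<omega>) at_top sequentially" and s: "0 \<le> s" and st: "s \<le> t'"
    and k: "k \<le> Ns Tn s t' \<omega>"
  shows "s \<le> Ts Tn s k \<omega>" "Ts Tn s k \<omega> \<le> t'" "Ts Tn s (k - 1) \<omega> \<le> Ts Tn s k \<omega>"
proof -
  note P = N_props[of Tn \<omega>, OF T0 inc lim]
  have le: "Ncnt Tn s \<omega> \<le> Ncnt Tn t' \<omega>"
    using P(1)[OF s] st by (intro P(2)) (use s in auto)
  show "s \<le> Ts Tn s k \<omega>"
  proof (cases "k = 0")
    case False
    have "\<not> Ncnt Tn s \<omega> + k \<le> Ncnt Tn s \<omega>" using False by simp
    hence "\<not> Tn (Ncnt Tn s \<omega> + k) \<omega> \<le> s" using P(2)[OF s] by blast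
    thus ?thesis using False by (simp add: Ts_def)
  qed (simp add: Ts_def)
  show "Ts Tn s k \<omega> \<le> t'"
  proof (cases "k = 0")
    case False
    have "Ncnt Tn s \<omega> + k \<le> Ncnt Tn t' \<omega>" using k le by (simp add: Ns_def)
    hence "Tn (Ncnt Tn s \<omega> + k) \<omega> \<le> Tn (Ncnt Tn t' \<omega>) \<omega>" by (rule Tn_mono[of Tn \<omega>, OF inc])
    also have "\<dots> \<le> t'" using P(1) s st by auto
    finally show ?thesis using False by (simp add: Ts_def)
  qed (simp add: Ts_def st)
  show "Ts Tn s (k - 1) \<omega> \<le> Ts Tn s k \<omega>"
  proof (cases "k \<le> 1")
    case True
    show ?thesis
    proof (cases "k = 0")
      case False
      hence k1: "k = 1" using True by simp
      have "\<not> Ncnt Tn s \<omega> + 1 \<le> Ncnt Tn s \<omega>" by simp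
      hence "\<not> Tn (Ncnt Tn s \<omega> + 1) \<omega> \<le> s" using P(2)[OF s] by blast
      thus ?thesis using k1 by (simp add: Ts_def)
    qed simp
  next
    case False
    thus ?thesis by (auto simp: Ts_def intro!: Tn_mono[of Tn \<omega>, OF inc])
  qed
qed

lemma Veps_contr:
  fixes Tn :: "nat \<Rightarrow> 'w \<Rightarrow> real"
  assumes T0: "Tn 0 \<omega> = 0" and inc: "\<And>n. Tn n \<omega> < Tn (Suc n) \<omega>"
    and lim: "filterlim (\<lambda>n. Tn n \<omega>) at_top sequentially" and s: "0 \<le> s" and st: "s \<le> t"
    and eps: "\<epsilon> \<in> {0<..1}"
    and inJ: "\<And>u. s \<le> u \<Longrightarrow> u \<le> t \<Longrightarrow> u \<in> J"
    and Gamma_contr: "\<And>x s t. (s, t) \<in> DeltaJ J \<Longrightarrow> Z_contraction \<iota> (\<Gamma> x s t)"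
    and D_contr: "\<And>\<epsilon> x y. \<epsilon> \<in> {0<..1} \<Longrightarrow> Z_contraction \<iota> (D \<epsilon> x y)"
  shows "Z_contraction \<iota> (Veps \<Gamma> D xs Tn \<epsilon> s t \<omega>)"
proof -
  define t' where "t' = s + (t - s) / \<epsilon>"
  have e0: "\<epsilon> > 0" using eps by auto
  have st': "s \<le> t'" using st e0 by (simp add: t'_def)
  have et: "\<epsilon> * (t' - s) = t - s" using e0 by (simp add: t'_def)
  define n where "n = Ns Tn s t' \<omega>"
  note B = Ts_bounds[of Tn \<omega>, OF T0 inc lim s st']
  have bnd: "s \<le> Ts_eps Tn \<epsilon> s k \<omega> \<and> Ts_eps Tn \<epsilon> s k \<omega> \<le> t" if "k \<le> n" for k
  proof -
    have a: "s \<le> Ts Tn s k \<omega>" "Ts Tn s k \<omega> \<le> t'" using B(1,2) that n_def by auto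
    have "\<epsilon> * (Ts Tn s k \<omega> - s) \<le> \<epsilon> * (t' - s)" using a e0 by (intro mult_left_mono) auto
    moreover have "0 \<le> \<epsilon> * (Ts Tn s k \<omega> - s)" using a e0 by simp
    ultimately show ?thesis using et by (simp add: Ts_eps_def)
  qed
  have mon: "Ts_eps Tn \<epsilon> s (k - 1) \<omega> \<le> Ts_eps Tn \<epsilon> s k \<omega>" if "k \<le> n" for k
  proof -
    have "Ts Tn s (k - 1) \<omega> \<le> Ts Tn s k \<omega>" using B(3) that n_def by auto
    thus ?thesis using e0 by (simp add: Ts_eps_def mult_left_mono)
  qed
  have P: "Z_contraction \<iota> (prodL (\<lambda>k. \<Gamma> (xs_s xs Tn s (k - 1) \<omega>) (Ts_eps Tn \<epsilon> s (k - 1) \<omega>) (Ts_eps Tn \<epsilon> s k \<omega>)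
                    o\<^sub>L D \<epsilon> (xs_s xs Tn s (k - 1) \<omega>) (xs_s xs Tn s k \<omega>)) n)"
  proof (rule prodL_contr)
    fix k assume k: "1 \<le> k" "k \<le> n"
    have "(Ts_eps Tn \<epsilon> s (k - 1) \<omega>, Ts_eps Tn \<epsilon> s k \<omega>) \<in> DeltaJ J"
      using bnd[of k] bnd[of "k - 1"] mon[of k] k unfolding DeltaJ_def by (auto intro!: inJ)
    thus "Z_contraction \<iota> (\<Gamma> (xs_s xs Tn s (k - 1) \<omega>) (Ts_eps Tn \<epsilon> s (k - 1) \<omega>) (Ts_eps Tn \<epsilon> s k \<omega>)
                    o\<^sub>L D \<epsilon> (xs_s xs Tn s (k - 1) \<omega>) (xs_s xs Tn s k \<omega>))"
      by (intro Z_contraction_comp Gamma_contr D_contr eps)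
  qed
  have "(Ts_eps Tn \<epsilon> s n \<omega>, t) \<in> DeltaJ J"
    using bnd[of n] st unfolding DeltaJ_def by (auto intro!: inJ)
  hence G: "Z_contraction \<iota> (\<Gamma> (xproc xs Tn t' \<omega>) (Ts_eps Tn \<epsilon> s n \<omega>) t)" by (rule Gamma_contr)
  show ?thesis unfolding Veps_def Let_def t'_def[symmetric] n_def[symmetric]
    using Z_contraction_comp[OF P G] .
qed


theorem proposition4p8:
  fixes J :: "real set"
    and M :: "'w measure"
    and xs :: "nat \<Rightarrow> 'w \<Rightarrow> 'x::finite"
    and Tn :: "nat \<Rightarrow> 'w \<Rightarrow> real"
    and Q :: "'x \<Rightarrow> 'x \<Rightarrow> real \<Rightarrow> real"
    and \<Gamma> :: "'x \<Rightarrow> real \<Rightarrow> real \<Rightarrow> ('y::{banach, second_countable_topology} \<Rightarrow>\<^sub>L 'y)"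
    and D :: "real \<Rightarrow> 'x \<Rightarrow> 'x \<Rightarrow> ('y \<Rightarrow>\<^sub>L 'y)"
    and \<iota> :: "'z::banach \<Rightarrow> 'y"
  assumes J: "is_time_set J"
    and complete: "complete_measure M"
    and MRP: "markov_renewal M xs Tn Q"
    and semigroup: "\<And>x. inhom_semigroup J (\<Gamma> x)"
    and Gamma_meas: "\<And>x. (\<lambda>(s, t, f). blinfun_apply (\<Gamma> x s t) f)
                         \<in> borel_measurable (restrict_space borel {(s, t, f). (s, t) \<in> DeltaJ J})"
    and D_meas: "\<And>\<epsilon>. \<epsilon> \<in> {0<..1} \<Longrightarrow>
                   (\<lambda>(x, y, f). blinfun_apply (D \<epsilon> x y) f)
                     \<in> borel_measurable (count_space UNIV \<Otimes>\<^sub>M count_space UNIV \<Otimes>\<^sub>M borel)"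
    and embed: "compact_embedding \<iota>"
    and Gamma_contr: "\<And>x s t. (s, t) \<in> DeltaJ J \<Longrightarrow> Z_contraction \<iota> (\<Gamma> x s t)"
    and D_contr: "\<And>\<epsilon> x y. \<epsilon> \<in> {0<..1} \<Longrightarrow> Z_contraction \<iota> (D \<epsilon> x y)"
  shows "\<forall>f s \<Delta> T. s \<in> J \<and> \<Delta> \<in> {0<..1} \<and> T \<in> J \<and> s \<le> T \<longrightarrow>
           (\<exists>K. compact K \<and>
              Liminf (at_right 0)
                (\<lambda>\<epsilon>. ereal (measure M {\<omega> \<in> space M.
                    \<forall>t\<in>{s..T}. blinfun_apply (Veps \<Gamma> D xs Tn \<epsilon> s t \<omega>) (\<iota> f) \<in> K}))
              \<ge> ereal (1 - \<Delta>))"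
  proof (intro allI impI)
  fix f :: 'z and s \<Delta> T :: real
  assume A: "s \<in> J \<and> \<Delta> \<in> {0<..1} \<and> T \<in> J \<and> s \<le> T"
  have ps: "prob_space M" using MRP by (simp add: markov_renewal_def)
  have T0: "\<And>\<omega>. \<omega> \<in> space M \<Longrightarrow> Tn 0 \<omega> = 0"
    and inc: "\<And>\<omega> n. \<omega> \<in> space M \<Longrightarrow> Tn n \<omega> < Tn (Suc n) \<omega>"
    and lim: "\<And>\<omega>. \<omega> \<in> space M \<Longrightarrow> filterlim (\<lambda>n. Tn n \<omega>) at_top sequentially"
    using MRP by (auto simp: markov_renewal_def)
  have Jpos: "\<And>u. u \<in> J \<Longrightarrow> 0 \<le> u" using J by (auto simp: is_time_set_def)
  have inJ: "\<And>u. 0 \<le> u \<Longrightarrow> u \<le> T \<Longrightarrow> u \<in> J" using J A by (auto simp: is_time_set_def)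
  have s0: "0 \<le> s" using Jpos A by auto
  define r where "r = norm f + 1"
  have r0: "r > 0" by (simp add: r_def add_nonneg_pos)
  define K where "K = (\<lambda>y. r *\<^sub>R y) ` closure (\<iota> ` cball 0 1)"
  have lin: "linear \<iota>" using embed by (simp add: compact_embedding_def bounded_linear.linear)
  have cK: "compact K" unfolding K_def using embed
    by (intro compact_scaling) (simp add: compact_embedding_def)
  have memK: "\<iota> z \<in> K" if "norm z \<le> norm f" for z
  proof -
    have "norm ((1 / r) *\<^sub>R z) \<le> 1" using that r0 by (simp add: r_def field_simps)
    hence "\<iota> ((1 / r) *\<^sub>R z) \<in> closure (\<iota> ` cball 0 1)"
      by (intro set_mp[OF closure_subset]) auto
    moreover have "\<iota> z = r *\<^sub>R \<iota> ((1 / r) *\<^sub>R z)" using r0 by (simp add: linear_cmul[OF lin])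
    ultimately show ?thesis unfolding K_def by blast
  qed
  have ev: "eventually (\<lambda>\<epsilon>. \<epsilon> \<in> {0<..1}) (at_right (0::real))"
    using eventually_at_right_real[of 0 "1::real"] by (rule eventually_mono) auto
  have "eventually (\<lambda>\<epsilon>. ereal (1 - \<Delta>) \<le> ereal (measure M {\<omega> \<in> space M.
                    \<forall>t\<in>{s..T}. blinfun_apply (Veps \<Gamma> D xs Tn \<epsilon> s t \<omega>) (\<iota> f) \<in> K})) (at_right 0)"
    using ev
  proof eventually_elim
    case (elim \<epsilon>)
    have "{\<omega> \<in> space M. \<forall>t\<in>{s..T}. blinfun_apply (Veps \<Gamma> D xs Tn \<epsilon> s t \<omega>) (\<iota> f) \<in> K} = space M"
    proof safe
      fix \<omega> t assume w: "\<omega> \<in> space M" and t: "t \<in> {s..T}"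
      have "Z_contraction \<iota> (Veps \<Gamma> D xs Tn \<epsilon> s t \<omega>)"
        by (rule Veps_contr[where J=J and \<iota>=\<iota> and \<Gamma>=\<Gamma> and D=D and Tn=Tn and \<omega>=\<omega>, OF T0[OF w] inc[OF w] lim[OF w]])
           (use A t elim s0 Gamma_contr D_contr in \<open>auto intro!: inJ\<close>)
      then obtain z' where "blinfun_apply (Veps \<Gamma> D xs Tn \<epsilon> s t \<omega>) (\<iota> f) = \<iota> z'" "norm z' \<le> norm f"
        unfolding Z_contraction_def by blast
      thus "blinfun_apply (Veps \<Gamma> D xs Tn \<epsilon> s t \<omega>) (\<iota> f) \<in> K" using memK by simp
    qed
    moreover have "measure M (space M) = 1" using ps by (simp add: prob_space.prob_space)
    ultimately show ?case using A by simp
  qed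
  hence "ereal (1 - \<Delta>) \<le> Liminf (at_right 0) (\<lambda>\<epsilon>. ereal (measure M {\<omega> \<in> space M.
                    \<forall>t\<in>{s..T}. blinfun_apply (Veps \<Gamma> D xs Tn \<epsilon> s t \<omega>) (\<iota> f) \<in> K}))"
    by (rule Liminf_bounded)
  thus "\<exists>K. compact K \<and>
              Liminf (at_right 0)
                (\<lambda>\<epsilon>. ereal (measure M {\<omega> \<in> space M.
                    \<forall>t\<in>{s..T}. blinfun_apply (Veps \<Gamma> D xs Tn \<epsilon> s t \<omega>) (\<iota> f) \<in> K}))
              \<ge> ereal (1 - \<Delta>)" using cK by blast
qed

end
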